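(* Let $m\ge 1$ and $n=2m$. For each integer $k$ with $0\le k\le 2^m$ define $$S_k=\{\,j\in\mathbb{Z}/(2^m-1)\mathbb{Z}\;:\;\mathrm{wt}_n\big((2^m+1)j+(2^m-1)k\big)<m\,\}.$$ Then $|S_k|\le 2^{m-1}$ for every $0\le k\le 2^m$, and equality $|S_k|=2^{m-1}$ holds if and only if $m$ is odd and $k=0$.
   Context: For a positive integer $n$ and an integer $u$, $\mathrm{wt}_n(u)$ denotes the number of 1's in the binary expansion of the unique representative of $u$ modulo $2^n-1$ lying in $\{0,1,\ldots,2^n-2\}$. (Note that $\mathrm{wt}_n((2^m+1)j+(2^m-1)k)$ depends only on $j$ modulo $2^m-1$ when $k$ is fixed.) *)

theory Defs
  imports Main
begin

definition wt :: "nat \<Rightarrow> int \<Rightarrow> nat" where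
  "wt n u = card {i. bit (nat (u mod (2 ^ n - 1))) i}"

definition S :: "nat \<Rightarrow> int \<Rightarrow> int set" where
  "S m k = {j \<in> {0..<2 ^ m - 1}. wt (2 * m) ((2 ^ m + 1) * j + (2 ^ m - 1) * k) < m}"

end

theory Submission
  imports Defs
begin

unbundle bit_operations_syntax

definition W :: "nat \<Rightarrow> nat" where "W x = card {i. bit x i}"

lemma bits_lt: "(x::nat) < 2^m \<Longrightarrow> bit x i \<Longrightarrow> i < m"
proof (rule ccontr)
  assume "x < 2^m" "bit x i" "\<not> i < m"
  then have "x < 2^i" by (metis le_less_trans not_less power_increasing_iff one_less_numeral_iff semiring_norm(76) le_eq_less_or_eq)
  then show False using \<open>bit x i\<close> by (simp add: bit_iff_odd)
qed

lemma W_eq: "(x::nat) < 2^m \<Longrightarrow> W x = card {i\<in>{..<m}. bit x i}"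
  unfolding W_def by (rule arg_cong[where f=card]) (auto dest: bits_lt)

lemma compl_bit: "(x::nat) < 2^m \<Longrightarrow> bit (2^m - 1 - x) i \<longleftrightarrow> i < m \<and> \<not> bit x i"
proof -
  assume x: "x < 2^m"
  have "int (2^m - 1 - x) = take_bit m (NOT (int x))"
  proof -
    have xi: "int x < 2^m" using x by (metis of_nat_less_iff of_nat_numeral of_nat_power)
    have "NOT (int x) = (2^m - 1 - int x) + (-1) * 2^m" by (simp add: not_int_def)
    then have "NOT (int x) mod 2^m = (2^m - 1 - int x) mod 2^m" by (metis mod_mult_self1)
    also have "\<dots> = 2^m - 1 - int x" using xi by (intro mod_pos_pos_trivial) auto
    finally show ?thesis using x by (simp add: take_bit_eq_mod of_nat_diff)
  qed
  then have "bit (int (2^m - 1 - x)) i = bit (take_bit m (NOT (int x))) i" by simp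
  then show ?thesis by (simp add: bit_take_bit_iff bit_not_iff bit_of_nat_iff)
qed

lemma W_compl: "(x::nat) < 2^m \<Longrightarrow> W (2^m - 1 - x) = m - W x"
proof -
  assume x: "x < 2^m"
  have "W (2^m - 1 - x) = card {i\<in>{..<m}. bit (2^m - 1 - x) i}"
    by (rule W_eq) simp
  also have "{i\<in>{..<m}. bit (2^m - 1 - x) i} = {..<m} - {i\<in>{..<m}. bit x i}"
    using compl_bit[OF x] by auto
  also have "card \<dots> = m - card {i\<in>{..<m}. bit x i}"
    by (subst card_Diff_subset) auto
  finally show ?thesis using W_eq[OF x] by simp
qed

lemma W_split: "(b::nat) < 2^m \<Longrightarrow> card {i. bit (b + 2^m * a) i} = W b + W a"
proof -
  assume b: "b < 2^m"
  let ?x = "b + 2^m * a"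
  have tb: "take_bit m ?x = b" using b by (simp add: take_bit_eq_mod)
  have db: "drop_bit m ?x = a" using b by (simp add: drop_bit_eq_div)
  have fa: "finite {i. bit a i}"
  proof -
    have "a < 2^a" by simp
    then have "{i. bit a i} \<subseteq> {..<a}" using bits_lt by blast
    then show ?thesis using finite_subset by blast
  qed
  have fb: "finite {i. bit b i}" using bits_lt[OF b] by (metis finite_lessThan finite_subset lessThan_iff mem_Collect_eq subsetI)
  have "{i. bit ?x i} = {i. bit b i} \<union> (\<lambda>i. i + m) ` {i. bit a i}"
  proof (rule set_eqI)
    fix i
    have "bit ?x i \<longleftrightarrow> (i < m \<and> bit b i) \<or> (m \<le> i \<and> bit a (i - m))"
    proof (cases "i < m")
      case True
      then have "bit ?x i = bit (take_bit m ?x) i" by (simp add: bit_take_bit_iff)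
      then show ?thesis using tb True by simp
    next
      case False
      then have "bit ?x i = bit (drop_bit m ?x) (i - m)" by (simp add: bit_drop_bit_eq)
      then show ?thesis using db False by simp
    qed
    then show "i \<in> {i. bit ?x i} \<longleftrightarrow> i \<in> {i. bit b i} \<union> (\<lambda>i. i + m) ` {i. bit a i}"
      using bits_lt[OF b] by (auto simp: image_iff)
  qed
  moreover have "{i. bit b i} \<inter> (\<lambda>i. i + m) ` {i. bit a i} = {}"
    using bits_lt[OF b] by auto
  ultimately have "card {i. bit ?x i} = card {i. bit b i} + card ((\<lambda>i. i + m) ` {i. bit a i})"
    using fa fb by (simp add: card_Un_disjoint)
  also have "card ((\<lambda>i. i + m) ` {i. bit a i}) = W a"
    unfolding W_def by (rule card_image) (simp add: inj_on_def)
  finally show ?thesis by (simp add: W_def)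
qed

lemma wt_mod: "u mod (2^n - 1) = v mod (2^n - 1) \<Longrightarrow> wt n u = wt n v"
  by (simp add: wt_def)

lemma W_le: "(x::nat) < 2^m \<Longrightarrow> W x \<le> m"
proof -
  assume x: "x < 2^m"
  have "card {i\<in>{..<m}. bit x i} \<le> card {..<m}" by (rule card_mono) auto
  then show ?thesis using W_eq[OF x] by simp
qed

lemma wt_digits:
  fixes a b :: int
  assumes "0 \<le> a" "a < 2^m" "0 \<le> b" "b < 2^m" "b + 2^m*a < 2^(2*m) - 1"
  shows "wt (2*m) (b + 2^m*a) = W (nat b) + W (nat a)"
proof -
  have "(b + 2^m*a) mod (2^(2*m) - 1) = b + 2^m*a" using assms by (intro mod_pos_pos_trivial) auto
  hence "wt (2*m) (b + 2^m*a) = card {i. bit (nat (b + 2^m*a)) i}" by (simp add: wt_def)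
  also have "nat (b + 2^m*a) = nat b + 2^m * nat a" using assms
    by (simp add: nat_add_distrib nat_mult_distrib nat_power_eq)
  also have "card {i. bit (nat b + 2^m * nat a) i} = W (nat b) + W (nat a)"
    by (rule W_split) (use assms in \<open>simp add: nat_less_iff\<close>)
  finally show ?thesis .
qed

lemma W_compl_int:
  fixes x :: int
  assumes "0 \<le> x" "x < 2^m"
  shows "W (nat (2^m - 1 - x)) = m - W (nat x)"
proof -
  have nx: "nat x < 2^m" using assms by (simp add: nat_less_iff)
  have "nat (2^m - 1 - x) = 2^m - 1 - nat x"
    using assms nx by (simp add: nat_diff_distrib nat_power_eq)
  then show ?thesis using W_compl[OF nx] by simp
qed

lemma negrot:
  fixes u :: int
  assumes m: "m \<ge> 1" and nz: "u mod (2^(2*m) - 1) \<noteq> 0"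
  shows "wt (2*m) (-(2^m * u)) = 2*m - wt (2*m) u"
proof -
  define q :: int where "q = 2^m"
  define N :: int where "N = 2^(2*m) - 1"
  have q2: "q \<ge> 2" using m unfolding q_def
    by (metis power_one_right power_increasing one_le_numeral)
  have N: "N = q*q - 1" by (simp add: N_def q_def mult_2 power_add)
  have Npos: "N > 0" using q2 N by (smt (verit) mult_le_cancel_left1)
  define r where "r = u mod N"
  have r: "0 \<le> r" "r < N" "r \<noteq> 0" using Npos nz by (auto simp: r_def N_def)
  define a where "a = r div q"
  define b where "b = r mod q"
  have rab: "r = b + q*a" by (simp add: a_def b_def)
  have b: "0 \<le> b" "b < q" using q2 by (auto simp: b_def)
  have a0: "0 \<le> a" using q2 r by (simp add: a_def pos_imp_zdiv_nonneg_iff)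
  have a: "a < q"
  proof (rule ccontr)
    assume "\<not> a < q"
    then have "q*a \<ge> q*q" using q2 by (intro mult_left_mono) auto
    then show False using rab b r N by linarith
  qed
  have wtu: "wt (2*m) u = W (nat b) + W (nat a)"
  proof -
    have "wt (2*m) u = wt (2*m) r" by (rule wt_mod) (simp add: r_def N_def)
    also have "\<dots> = W (nat b) + W (nat a)" unfolding rab q_def
      by (rule wt_digits) (use a a0 b r rab in \<open>auto simp: q_def N_def\<close>)
    finally show ?thesis .
  qed
  define v where "v = (q-1-a) + q*(q-1-b)"
  have "v + q*r = N*(1+a)" by (simp add: v_def rab N algebra_simps)
  then have "v = -(q*r) + N*(1+a)" by simp
  then have "v mod N = (-(q*r)) mod N" by (metis mod_mult_self2 mult.commute)
  also have "\<dots> = (-(q*u)) mod N" unfolding r_def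
    by (metis mod_minus_eq mod_mult_right_eq)
  finally have vm: "v mod N = (-(q*u)) mod N" .
  have ab0: "a + q*b \<ge> 1"
  proof (rule ccontr)
    assume "\<not> a + q*b \<ge> 1"
    then have "a = 0 \<and> b = 0" using a0 b q2
      by (smt (verit) mult_nonneg_nonneg mult_pos_pos)
    then show False using rab r by simp
  qed
  have vN: "v = N - (a + q*b)" by (simp add: v_def N algebra_simps)
  have "wt (2*m) (-(2^m * u)) = wt (2*m) v" by (rule wt_mod) (use vm in \<open>simp add: q_def N_def\<close>)
  also have "\<dots> = W (nat (q-1-a)) + W (nat (q-1-b))" unfolding v_def q_def
    by (rule wt_digits) (use a a0 b ab0 vN in \<open>auto simp: q_def N_def v_def\<close>)
  also have "\<dots> = (m - W (nat a)) + (m - W (nat b))" unfolding q_def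
    using W_compl_int a a0 b by (simp add: q_def)
  finally show ?thesis using wtu W_le[of "nat a" m] W_le[of "nat b" m] a a0 b
    by (simp add: q_def nat_less_iff add.commute mult_2)
qed

lemma nzl:
  fixes q j k :: int
  assumes "odd (q+1)" "0 < k" "k \<le> q"
  shows "\<not> ((q+1)*(q-1)) dvd ((q+1)*j + (q-1)*k)"
proof
  assume "((q+1)*(q-1)) dvd ((q+1)*j + (q-1)*k)"
  then have "(q+1) dvd ((q+1)*j + (q-1)*k)" using dvd_mult_left by blast
  moreover have "(q+1)*j + (q-1)*k = (q+1)*(j+k) - 2*k" by (simp add: algebra_simps)
  ultimately have "(q+1) dvd (q+1)*(j+k) - 2*k" by simp
  then have "(q+1) dvd (q+1)*(j+k) - ((q+1)*(j+k) - 2*k)" by (rule dvd_diff[OF dvd_triv_left])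
  then have "(q+1) dvd 2*k" by simp
  then have "(q+1) dvd k" using assms(1)
    by (metis coprime_right_2_iff_odd coprime_dvd_mult_right_iff mult.commute)
  then show False using assms zdvd_not_zless by force
qed

theorem proposition2:
  fixes m :: nat and k :: int
  assumes "m \<ge> 1" and "0 \<le> k" and "k \<le> 2 ^ m"
  shows "card (S m k) \<le> 2 ^ (m - 1) \<and>
         (card (S m k) = 2 ^ (m - 1) \<longleftrightarrow> odd m \<and> k = 0)"
proof -
  define q :: int where "q = 2^m"
  define N :: int where "N = 2^(2*m) - 1"
  define U where "U j = (q+1)*j + (q-1)*k" for j :: int
  define f where "f j = wt (2*m) (U j)" for j
  define J :: "int set" where "J = {0..<q - 1}"
  define \<tau> where "\<tau> j = (-j) mod (q - 1)" for j :: int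
  have q2: "q \<ge> 2" using assms(1) unfolding q_def
    by (metis power_one_right power_increasing one_le_numeral)
  have N: "N = (q+1)*(q-1)"
  proof -
    have "(2::int)^(2*m) = 2^m * 2^m" by (simp add: mult_2 power_add)
    then show ?thesis by (simp add: N_def q_def algebra_simps)
  qed
  have SJ: "S m k = {j\<in>J. f j < m}" by (simp add: S_def J_def f_def U_def q_def)
  have finJ: "finite J" by (simp add: J_def)
  have cardJ: "card J = 2^m - 1"
  proof -
    have "card J = nat (2^m - 1)" by (simp add: J_def q_def)
    also have "\<dots> = 2^m - 1" by (simp add: nat_diff_distrib nat_power_eq)
    finally show ?thesis .
  qed
  have tauJ: "\<tau> j \<in> J" if "j \<in> J" for j
    using q2 by (simp add: J_def \<tau>_def)
  have tautau: "\<tau> (\<tau> j) = j" if "j \<in> J" for j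
    using that by (simp add: \<tau>_def J_def mod_minus_eq)
  have inj: "inj_on \<tau> A" if "A \<subseteq> J" for A
    by (rule inj_onI) (metis tautau that subsetD)
  have key: "f (\<tau> j) = 2*m - f j" if "j \<in> J" "U j mod N \<noteq> 0" for j
  proof -
    have t: "\<tau> j = -j - (q-1)*((-j) div (q-1))" by (simp add: \<tau>_def minus_div_mult_eq_mod[symmetric])
    have "U (\<tau> j) = -(q * U j) + N * (j + k - (-j) div (q-1))"
      unfolding U_def N t by (simp add: algebra_simps)
    then have "U (\<tau> j) mod N = (-(q * U j)) mod N" by (metis mod_mult_self2)
    then have "f (\<tau> j) = wt (2*m) (-(2^m * U j))" unfolding f_def
      by (intro wt_mod) (simp add: N_def flip: q_def)
    also have "\<dots> = 2*m - f j" unfolding f_def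
      by (rule negrot) (use assms(1) that in \<open>simp_all add: N_def\<close>)
    finally show ?thesis .
  qed
  have pm: "(2::nat)^m = 2*2^(m-1)" using assms(1) by (cases m) auto
  show ?thesis
  proof (cases "k = 0")
    case False
    have nz: "U j mod N \<noteq> 0" for j
      using nzl[of q k j] False assms(2,3) assms(1) unfolding U_def N
      by (auto simp: q_def)
    define A where "A = S m k"
    have AJ: "A \<subseteq> J" by (auto simp: A_def SJ)
    have "\<tau> ` A \<subseteq> J - A"
    proof
      fix x assume "x \<in> \<tau> ` A"
      then obtain j where j: "j \<in> A" "x = \<tau> j" by auto
      then have "j \<in> J" "f j < m" by (auto simp: A_def SJ)
      then have "f x = 2*m - f j" using key nz j by simp
      then have "f x \<ge> m" using \<open>f j < m\<close> by simp
      then show "x \<in> J - A" using tauJ \<open>j \<in> J\<close> j by (auto simp: A_def SJ)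
    qed
    then have "A \<union> \<tau> ` A \<subseteq> J" "A \<inter> \<tau> ` A = {}" using AJ by auto
    then have "card A + card (\<tau> ` A) \<le> card J"
      by (metis card_Un_disjoint card_mono finJ finite_subset finite_Un)
    moreover have "card (\<tau> ` A) = card A" using inj[OF AJ] by (rule card_image)
    ultimately have c: "2 * card A \<le> 2^m - 1" using cardJ by simp
    have "(0::nat) < 2^(m-1)" by simp
    then have "card A < 2^(m-1)" using pm c by linarith
    then show ?thesis using False by (simp add: A_def)
  next
    case True
    have f0: "f j = 2 * W (nat j)" if "j \<in> J" for j
    proof -
      have j: "0 \<le> j" "j \<le> q - 2" using that by (auto simp: J_def)
      have "j*(q+1) \<le> (q-2)*(q+1)" using j q2 by (intro mult_right_mono) auto
      then have lt: "j + q*j < (q+1)*(q-1)" using q2 by (simp add: algebra_simps)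
      have "f j = wt (2*m) (j + 2^m*j)" by (simp add: f_def U_def True q_def algebra_simps)
      also have "\<dots> = W (nat j) + W (nat j)"
        by (rule wt_digits) (use j lt N in \<open>auto simp: N_def q_def\<close>)
      finally show ?thesis by simp
    qed
    define J' where "J' = J - {0}"
    define A where "A = S m k - {0}"
    define T where "T = {j\<in>J'. f j > m}"
    define E where "E = {j\<in>J'. f j = m}"
    have 0: "0 \<in> S m k" using q2 f0[of 0] assms(1) by (simp add: SJ J_def W_def)
    have nz0: "U j mod N \<noteq> 0" if "j \<in> J'" for j
    proof -
      have j: "1 \<le> j" "j \<le> q - 2" using that by (auto simp: J'_def J_def)
      have "j*(q+1) \<le> (q-2)*(q+1)" using j q2 by (intro mult_right_mono) auto
      then have h1: "j + (q + (j * q + 2)) \<le> q * q" by (simp add: algebra_simps)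
      have h2: "j*q \<ge> 0" using j q2 by simp
      have h3: "U j = j + j*q" by (simp add: U_def True algebra_simps)
      have h4: "N = q*q - 1" by (simp add: N algebra_simps)
      have "U j < N" "0 < U j" using j q2 h1 h2 h3 h4 by linarith+
      then show ?thesis by simp
    qed
    have tJ': "\<tau> j \<in> J'" if "j \<in> J'" for j
    proof -
      have "\<tau> j \<in> J" using tauJ that by (simp add: J'_def)
      moreover have "\<tau> j \<noteq> 0"
      proof
        assume "\<tau> j = 0"
        then have "\<tau> (\<tau> j) = 0" by (simp add: \<tau>_def)
        then show False using tautau[of j] that by (auto simp: J'_def)
      qed
      ultimately show ?thesis by (simp add: J'_def)
    qed
    have fJ': "finite J'" using finJ by (simp add: J'_def)
    have AJ': "A \<subseteq> J'" "T \<subseteq> J'" "E \<subseteq> J'" by (auto simp: A_def J'_def SJ T_def E_def)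
    have "\<tau> ` A \<subseteq> T"
    proof
      fix x assume "x \<in> \<tau> ` A"
      then obtain j where j: "j \<in> A" "x = \<tau> j" by auto
      then have "j \<in> J'" "f j < m" using AJ' by (auto simp: A_def SJ)
      then have "f x = 2*m - f j" using key nz0 j by (simp add: J'_def)
      then show "x \<in> T" using tJ' \<open>j \<in> J'\<close> j \<open>f j < m\<close> by (auto simp: T_def)
    qed
    then have c1: "card A \<le> card T"
    proof -
      assume sub: "\<tau> ` A \<subseteq> T"
      have "inj_on \<tau> A" using AJ' by (intro inj) (auto simp: J'_def)
      then have "card A = card (\<tau> ` A)" by (simp add: card_image)
      also have "\<dots> \<le> card T" by (rule card_mono) (use finite_subset[OF AJ'(2) fJ'] sub in auto)
      finally show ?thesis .
    qed
    have "\<tau> ` T \<subseteq> A"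
    proof
      fix x assume "x \<in> \<tau> ` T"
      then obtain j where j: "j \<in> T" "x = \<tau> j" by auto
      then have "j \<in> J'" "f j > m" by (auto simp: T_def)
      then have "f x = 2*m - f j" using key nz0 j by (simp add: J'_def)
      then show "x \<in> A" using tJ' \<open>j \<in> J'\<close> j \<open>f j > m\<close> assms(1)
        by (auto simp: A_def SJ J'_def)
    qed
    then have c2: "card T \<le> card A"
    proof -
      assume sub: "\<tau> ` T \<subseteq> A"
      have "inj_on \<tau> T" using AJ' by (intro inj) (auto simp: J'_def)
      then have "card T = card (\<tau> ` T)" by (simp add: card_image)
      also have "\<dots> \<le> card A" by (rule card_mono) (use finite_subset[OF AJ'(1) fJ'] sub in auto)
      finally show ?thesis .
    qed
    have part: "J' = A \<union> T \<union> E" by (auto simp: J'_def A_def SJ T_def E_def)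
    have fA: "finite A" "finite T" "finite E" using AJ' fJ' by (auto intro: finite_subset)
    have d1: "A \<inter> T = {}" by (auto simp: A_def SJ T_def)
    have d2: "(A \<union> T) \<inter> E = {}" by (auto simp: A_def SJ T_def E_def)
    have "card J' = card A + card T + card E"
      unfolding part using fA d1 d2 by (simp add: card_Un_disjoint)
    moreover have "card J' = 2^m - 2" using cardJ 0 by (simp add: J'_def SJ)
    moreover have "card (S m k) = card A + 1"
    proof -
      have "finite (S m k)" using finJ SJ by simp
      then show ?thesis using 0 card.remove[of "S m k" 0] by (simp add: A_def)
    qed
    moreover have "(0::nat) < 2^(m-1)" by simp
    ultimately have eq: "2 * card (S m k) + card E = 2^m" using c1 c2 pm by linarith
    have Ee: "card E = 0 \<longleftrightarrow> odd m"
    proof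
      assume "card E = 0"
      then have Eemp: "E = {}" using finite_subset[OF AJ'(3) fJ'] by simp
      show "odd m"
      proof (rule ccontr)
        assume "\<not> odd m"
        define t where "t = m div 2"
        have mt: "m = 2*t" "t \<ge> 1" using \<open>\<not> odd m\<close> assms(1) by (auto simp: t_def)
        define j0 :: int where "j0 = 2^t - 1"
        have "(2::int)^t \<ge> 2" using mt by (metis power_one_right power_increasing one_le_numeral)
        moreover have "(2::int)^t * 2 \<le> 2^t * 2^t" using calculation by (intro mult_left_mono) auto
        ultimately have j0J: "j0 \<in> J'" using mt by (simp add: j0_def J'_def J_def q_def power_add mult_2)
        have "W (nat j0) = t" using W_compl_int[of 0 t] by (simp add: j0_def W_def)
        then have "j0 \<in> E" using f0[of j0] j0J mt by (simp add: E_def J'_def)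
        then show False using Eemp by simp
      qed
    next
      assume "odd m"
      have "E = {}"
      proof (rule ccontr)
        assume "E \<noteq> {}"
        then obtain j where "j \<in> E" by auto
        then have "f j = m" "j \<in> J" by (auto simp: E_def J'_def)
        then show False using f0 \<open>odd m\<close> by force
      qed
      then show "card E = 0" by simp
    qed
    show ?thesis using eq Ee True pm by auto
  qed
qed

end
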